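(* $\mathbf{CL7}$ proves (derives) every binary tautological $\to$-sequent.
   Context: $\to$-formulas are built from propositional atoms with binary $\to$; a $\to$-sequent is $\Gamma\Rightarrow F$ with $\Gamma$ a finite multiset of $\to$-formulas and $F$ a $\to$-formula. A sequent $E_1,\dots,E_n\Rightarrow F$ is tautological (resp. binary) if the classical formula $E_1\wedge\dots\wedge E_n\to F$ is a classical tautology (resp. has no atom occurring more than twice). $\mathbf{CL7}$ has axioms all sequents $\Gamma,F\Rightarrow F$ and exactly two rules: Right $\to$: from $\Gamma,E\Rightarrow F$ infer $\Gamma\Rightarrow E\to F$; Left $\to$: from $\Gamma,F\Rightarrow G$ and $\Delta\Rightarrow E$ infer $\Gamma,\Delta,E\to F\Rightarrow G$ (no contraction). *)

theory Defs
  imports Main "HOL-Library.Multiset"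
begin

datatype 'a fm = Atom 'a | Imp "'a fm" "'a fm"

fun eval :: "('a \<Rightarrow> bool) \<Rightarrow> 'a fm \<Rightarrow> bool" where
  "eval v (Atom p) = v p"
| "eval v (Imp A B) = (eval v A \<longrightarrow> eval v B)"

fun occ :: "'a \<Rightarrow> 'a fm \<Rightarrow> nat" where
  "occ p (Atom q) = (if p = q then 1 else 0)"
| "occ p (Imp A B) = occ p A + occ p B"

definition tautological :: "'a fm multiset \<Rightarrow> 'a fm \<Rightarrow> bool" where
  "tautological \<Gamma> F \<longleftrightarrow> (\<forall>v. (\<forall>E \<in># \<Gamma>. eval v E) \<longrightarrow> eval v F)"

definition binary :: "'a fm multiset \<Rightarrow> 'a fm \<Rightarrow> bool" where
  "binary \<Gamma> F \<longleftrightarrow> (\<forall>p. (\<Sum>E\<in>#\<Gamma>. occ p E) + occ p F \<le> 2)"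

inductive CL7 :: "'a fm multiset \<Rightarrow> 'a fm \<Rightarrow> bool" where
  ax: "CL7 (\<Gamma> + {#F#}) F"
| impR: "CL7 (\<Gamma> + {#E#}) F \<Longrightarrow> CL7 \<Gamma> (Imp E F)"
| impL: "CL7 (\<Gamma> + {#F#}) G \<Longrightarrow> CL7 \<Delta> E \<Longrightarrow> CL7 (\<Gamma> + \<Delta> + {#Imp E F#}) G"

end

theory Submission
  imports Defs
begin

fun head :: "'a fm \<Rightarrow> 'a" where
  "head (Atom p) = p"
| "head (Imp a b) = head b"

fun pos :: "'a fm \<Rightarrow> 'a set" and neg :: "'a fm \<Rightarrow> 'a set" where
  "pos (Atom p) = {p}"
| "pos (Imp a b) = neg a \<union> pos b"
| "neg (Atom p) = {}"
| "neg (Imp a b) = pos a \<union> neg b"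

fun fsize :: "'a fm \<Rightarrow> nat" where
  "fsize (Atom p) = 1"
| "fsize (Imp a b) = fsize a + fsize b + 1"

lemma head_pos: "head F \<in> pos F"
  by (induction F) auto

lemma eval_head: "v (head F) \<Longrightarrow> eval v F"
  by (induction F) auto

lemma occ_pos_neg: "(p \<in> pos F \<longrightarrow> occ p F \<ge> 1) \<and> (p \<in> neg F \<longrightarrow> occ p F \<ge> 1)"
  by (induction F) auto

lemma occ_both: "p \<in> pos F \<Longrightarrow> p \<in> neg F \<Longrightarrow> occ p F \<ge> 2"
proof (induction F)
  case (Atom x) then show ?case by simp
next
  case (Imp a b)
  then show ?case using occ_pos_neg[of p a] occ_pos_neg[of p b] by auto
qed

lemma eval_mono:
  "(\<forall>p\<in>pos F. v p \<longrightarrow> w p) \<Longrightarrow> (\<forall>p\<in>neg F. w p \<longrightarrow> v p) \<Longrightarrow> eval v F \<Longrightarrow> eval w F"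
proof (induction F arbitrary: v w)
  case (Atom x) then show ?case by simp
next
  case (Imp a b)
  show ?case
  proof (simp, rule impI)
    assume "eval w a"
    then have "eval v a" using Imp.IH(1)[of w v] Imp.prems by auto
    then have "eval v b" using Imp.prems by simp
    then show "eval w b" using Imp.IH(2)[of v w] Imp.prems by auto
  qed
qed

lemma eval_upd: "occ p F = 0 \<Longrightarrow> eval (v(p:=b)) F = eval v F"
  by (induction F) (auto split: if_splits)

lemma irr:
  assumes "tautological (Ga + Gb) X"
    and "\<forall>D\<in>#Gb. head D \<notin> pos X \<and> (\<forall>D'\<in>#Ga. head D \<notin> neg D')"
  shows "tautological Ga X"
  unfolding tautological_def
proof (intro allI impI)
  fix v assume va: "\<forall>E\<in>#Ga. eval v E"
  define H where "H = head ` set_mset Gb"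
  define w where "w = (\<lambda>p. p \<in> H \<or> v p)"
  have H1: "\<And>p E. p \<in> H \<Longrightarrow> E \<in># Ga \<Longrightarrow> p \<notin> neg E"
    using assms(2) unfolding H_def by blast
  have H2: "\<And>p. p \<in> H \<Longrightarrow> p \<notin> pos X"
    using assms(2) unfolding H_def by blast
  have gb: "\<forall>E\<in>#Gb. eval w E"
  proof
    fix E assume "E \<in># Gb"
    then have "w (head E)" unfolding w_def H_def by simp
    then show "eval w E" by (rule eval_head)
  qed
  have ga: "\<forall>E\<in>#Ga. eval w E"
  proof
    fix E assume E: "E \<in># Ga"
    show "eval w E"
    proof (rule eval_mono[of E v w])
      show "\<forall>p\<in>pos E. v p \<longrightarrow> w p" unfolding w_def by simp
      show "\<forall>p\<in>neg E. w p \<longrightarrow> v p"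
      proof (intro ballI impI)
        fix p assume p: "p \<in> neg E" and "w p"
        then have "p \<notin> H" using H1 E by blast
        with \<open>w p\<close> show "v p" unfolding w_def by simp
      qed
      show "eval v E" using va E by simp
    qed
  qed
  have "\<forall>E\<in>#Ga + Gb. eval w E"
  proof
    fix E assume "E \<in># Ga + Gb"
    then consider "E \<in># Ga" | "E \<in># Gb" by fastforce
    then show "eval w E" using ga gb by cases blast+
  qed
  then have ew: "eval w X" using assms(1) unfolding tautological_def by blast
  show "eval v X"
  proof (rule eval_mono[of X w v])
    show "\<forall>p\<in>pos X. w p \<longrightarrow> v p"
    proof (intro ballI impI)
      fix p assume p: "p \<in> pos X" and "w p"
      then have "p \<notin> H" using H2 by blast
      with \<open>w p\<close> show "v p" unfolding w_def by simp
    qed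
    show "\<forall>p\<in>neg X. v p \<longrightarrow> w p" unfolding w_def by simp
    show "eval w X" by (rule ew)
  qed
qed

inductive_set reach :: "'a fm multiset \<Rightarrow> 'a fm \<Rightarrow> 'a set" for G A where
  r1: "p \<in> pos A \<Longrightarrow> p \<in> reach G A"
| r2: "D \<in># G \<Longrightarrow> head D \<in> reach G A \<Longrightarrow> p \<in> neg D \<Longrightarrow> p \<in> reach G A"

lemma sum_le_member: "D \<in># M \<Longrightarrow> f D \<le> (\<Sum>E\<in>#M. (f E :: nat))"
  by (metis add_le_cancel_left le_add1 multi_member_split sum_mset.insert
        image_mset_add_mset add.commute add_leD1 le_refl)

lemma split_lemma:
  assumes tA: "tautological G A" and tB: "tautological G B"
    and bin: "\<forall>p. (\<Sum>E\<in>#G. occ p E) + occ p A + occ p B \<le> 2"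
  shows "\<exists>G1 G2. G = G1 + G2 \<and> tautological G1 A \<and> tautological G2 B"
proof -
  define R where "R = reach G A"
  define G1 where "G1 = filter_mset (\<lambda>D. head D \<in> R) G"
  define G2 where "G2 = filter_mset (\<lambda>D. head D \<notin> R) G"
  have GG: "G = G1 + G2" unfolding G1_def G2_def by (simp add: multiset_partition)
  have t1: "tautological G1 A"
  proof (rule irr[of G1 G2])
    show "tautological (G1 + G2) A" using tA GG by simp
    show "\<forall>D\<in>#G2. head D \<notin> pos A \<and> (\<forall>D'\<in>#G1. head D \<notin> neg D')"
    proof
      fix D assume D: "D \<in># G2"
      then have nR: "head D \<notin> R" unfolding G2_def by simp
      have a1: "head D \<notin> pos A"
      proof
        assume "head D \<in> pos A"
        then have "head D \<in> R" unfolding R_def by (rule reach.r1)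
        with nR show False by simp
      qed
      have a2: "\<forall>D'\<in>#G1. head D \<notin> neg D'"
      proof
        fix D' assume D': "D' \<in># G1"
        then have "D' \<in># G" "head D' \<in> R" unfolding G1_def by simp_all
        then show "head D \<notin> neg D'" using nR reach.r2[of D' G A "head D"] unfolding R_def by blast
      qed
      show "head D \<notin> pos A \<and> (\<forall>D'\<in>#G1. head D \<notin> neg D')" using a1 a2 by blast
    qed
  qed
  have key: "\<And>D. D \<in># G1 \<Longrightarrow> (\<Sum>E\<in>#G2. occ (head D) E) + occ (head D) B = 0"
  proof -
    fix D assume D: "D \<in># G1"
    let ?h = "head D"
    have hR: "?h \<in> R" using D unfolding G1_def by simp
    have two: "(\<Sum>E\<in>#G1. occ ?h E) + occ ?h A \<ge> 2"
    proof -
      have oD: "occ ?h D \<ge> 1" using occ_pos_neg[of ?h D] head_pos[of D] by auto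
      have s1: "(\<Sum>E\<in>#G1. occ ?h E) \<ge> occ ?h D" using sum_le_member[OF D] .
      from hR[unfolded R_def] show ?thesis
      proof (cases rule: reach.cases)
        case r1
        then have "occ ?h A \<ge> 1" using occ_pos_neg[of ?h A] by auto
        then show ?thesis using oD s1 by linarith
      next
        case (r2 D'')
        have D''1: "D'' \<in># G1" using r2 unfolding G1_def R_def by simp
        show ?thesis
        proof (cases "D'' = D")
          case True
          then have "occ ?h D \<ge> 2" using occ_both[of ?h D] head_pos[of D] r2 by auto
          then show ?thesis using s1 by linarith
        next
          case False
          obtain M where M: "G1 = add_mset D M" using D by (metis multi_member_split)
          have "D'' \<in># M" using D''1 False M by auto
          then have "occ ?h D'' \<le> (\<Sum>E\<in>#M. occ ?h E)" by (rule sum_le_member)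
          moreover have "occ ?h D'' \<ge> 1" using occ_pos_neg[of ?h D''] r2 by auto
          ultimately show ?thesis using oD M by simp
        qed
      qed
    qed
    have "(\<Sum>E\<in>#G. occ ?h E) = (\<Sum>E\<in>#G1. occ ?h E) + (\<Sum>E\<in>#G2. occ ?h E)"
      using GG by simp
    then show "(\<Sum>E\<in>#G2. occ ?h E) + occ ?h B = 0" using bin[rule_format, of ?h] two by linarith
  qed
  have t2: "tautological G2 B"
  proof (rule irr[of G2 G1])
    show "tautological (G2 + G1) B" using tB GG by (simp add: add.commute)
    show "\<forall>D\<in>#G1. head D \<notin> pos B \<and> (\<forall>D'\<in>#G2. head D \<notin> neg D')"
    proof
      fix D assume D: "D \<in># G1"
      have k: "(\<Sum>E\<in>#G2. occ (head D) E) + occ (head D) B = 0" using key[OF D] .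
      have b1: "head D \<notin> pos B" using k occ_pos_neg[of "head D" B] by auto
      have b2: "\<forall>D'\<in>#G2. head D \<notin> neg D'"
      proof
        fix D' assume D': "D' \<in># G2"
        have "occ (head D) D' \<le> (\<Sum>E\<in>#G2. occ (head D) E)" using sum_le_member[OF D'] .
        then have "occ (head D) D' = 0" using k by linarith
        then show "head D \<notin> neg D'" using occ_pos_neg[of "head D" D'] by auto
      qed
      show "head D \<notin> pos B \<and> (\<forall>D'\<in>#G2. head D \<notin> neg D')" using b1 b2 by blast
    qed
  qed
  show ?thesis using GG t1 t2 by blast
qed

definition msize :: "'a fm multiset \<Rightarrow> 'a fm \<Rightarrow> nat" where
  "msize G F = (\<Sum>E\<in>#G. fsize E) + fsize F"

theorem lemma4p3:
  fixes \<Gamma> :: "'a fm multiset" and F :: "'a fm"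
  assumes "tautological \<Gamma> F" and "binary \<Gamma> F"
  shows "CL7 \<Gamma> F"
  using assms
proof (induction "msize \<Gamma> F" arbitrary: \<Gamma> F rule: less_induct)
  case less
  show ?case
  proof (cases F)
    case (Imp E F')
    have "CL7 (\<Gamma> + {#E#}) F'"
    proof (rule less.hyps)
      show "msize (\<Gamma> + {#E#}) F' < msize \<Gamma> F" unfolding msize_def Imp by simp
      show "tautological (\<Gamma> + {#E#}) F'" using less.prems(1) unfolding Imp tautological_def by auto
      show "binary (\<Gamma> + {#E#}) F'" using less.prems(2) unfolding Imp binary_def
        by (simp add: ac_simps)
    qed
    then show ?thesis unfolding Imp by (rule CL7.impR)
  next
    case (Atom q)
    show ?thesis
    proof (cases "Atom q \<in># \<Gamma>")
      case True
      then obtain M where "\<Gamma> = add_mset (Atom q) M" by (metis multi_member_split)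
      then have "\<Gamma> = M + {#Atom q#}" by simp
      then show ?thesis unfolding Atom using CL7.ax[of M "Atom q"] by simp
    next
      case False
      have "\<exists>C\<in>#\<Gamma>. head C = q"
      proof (rule ccontr)
        assume "\<not> ?thesis"
        then have "\<forall>E\<in>#\<Gamma>. head E \<noteq> q" by blast
        then have "\<forall>E\<in>#\<Gamma>. eval (\<lambda>p. p \<noteq> q) E" using eval_head[of "\<lambda>p. p \<noteq> q"] by blast
        then have "eval (\<lambda>p. p \<noteq> q) (Atom q)" using less.prems(1) unfolding tautological_def Atom by blast
        then show False by simp
      qed
      then obtain C where C: "C \<in># \<Gamma>" "head C = q" by blast
      then obtain A1 B where CAB: "C = Imp A1 B" using False by (cases C) auto
      have hB: "head B = q" using C CAB by simp
      obtain G' where G': "\<Gamma> = add_mset C G'" using C by (metis multi_member_split)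
      have binp: "\<And>p. (\<Sum>E\<in>#G'. occ p E) + occ p A1 + occ p B + occ p (Atom q) \<le> 2"
        using less.prems(2) unfolding binary_def Atom G' CAB by (simp add: ac_simps)
      have qocc: "occ q (Atom q) = 1" by simp
      have qB: "occ q B \<ge> 1" using occ_pos_neg[of q B] head_pos[of B] hB by auto
      have q0: "(\<Sum>E\<in>#G'. occ q E) + occ q A1 = 0" using binp[of q] qB qocc by linarith
      have tA1: "tautological G' A1"
        unfolding tautological_def
      proof (intro allI impI)
        fix v assume v: "\<forall>E\<in>#G'. eval v E"
        show "eval v A1"
        proof (rule ccontr)
          assume na: "\<not> eval v A1"
          let ?w = "v(q := False)"
          have "\<forall>E\<in>#G'. eval ?w E"
          proof
            fix E assume E: "E \<in># G'"
            have "occ q E = 0" using sum_le_member[OF E, of "occ q"] q0 by linarith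
            then show "eval ?w E" using eval_upd[of q E v False] v E by simp
          qed
          moreover have "\<not> eval ?w A1" using na eval_upd[of q A1 v False] q0 by simp
          moreover have "eval ?w C" using \<open>\<not> eval ?w A1\<close> CAB by simp
          ultimately have "\<forall>E\<in>#\<Gamma>. eval ?w E" unfolding G' by simp
          then have "eval ?w (Atom q)" using less.prems(1) unfolding tautological_def Atom by blast
          then show False by simp
        qed
      qed
      have tB: "tautological G' (Imp B (Atom q))"
        unfolding tautological_def
      proof (intro allI impI)
        fix v assume v: "\<forall>E\<in>#G'. eval v E"
        have "eval v B \<Longrightarrow> eval v (Atom q)"
        proof -
          assume "eval v B"
          then have "eval v C" using CAB by simp
          then have "\<forall>E\<in>#\<Gamma>. eval v E" using v unfolding G' by simp
          then show "eval v (Atom q)" using less.prems(1) unfolding tautological_def Atom by blast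
        qed
        then show "eval v (Imp B (Atom q))" by simp
      qed
      have binS: "\<forall>p. (\<Sum>E\<in>#G'. occ p E) + occ p A1 + occ p (Imp B (Atom q)) \<le> 2"
        using binp by (simp add: ac_simps)
      obtain G1 G2 where GG: "G' = G1 + G2" and t1: "tautological G1 A1"
        and t2: "tautological G2 (Imp B (Atom q))"
        using split_lemma[OF tA1 tB binS] by blast
      have c1: "CL7 G1 A1"
      proof (rule less.hyps)
        show "msize G1 A1 < msize \<Gamma> F" unfolding msize_def Atom G' CAB GG by simp
        show "tautological G1 A1" by (rule t1)
        show "binary G1 A1" unfolding binary_def
        proof
          fix p have "(\<Sum>E\<in>#G'. occ p E) = (\<Sum>E\<in>#G1. occ p E) + (\<Sum>E\<in>#G2. occ p E)"
            unfolding GG by simp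
          then show "(\<Sum>E\<in>#G1. occ p E) + occ p A1 \<le> 2" using binp[of p] by linarith
        qed
      qed
      have c2: "CL7 (G2 + {#B#}) (Atom q)"
      proof (rule less.hyps)
        show "msize (G2 + {#B#}) (Atom q) < msize \<Gamma> F" unfolding msize_def Atom G' CAB GG by simp
        show "tautological (G2 + {#B#}) (Atom q)" using t2 unfolding tautological_def by auto
        show "binary (G2 + {#B#}) (Atom q)" unfolding binary_def
        proof
          fix p have "(\<Sum>E\<in>#G'. occ p E) = (\<Sum>E\<in>#G1. occ p E) + (\<Sum>E\<in>#G2. occ p E)"
            unfolding GG by simp
          moreover have "(\<Sum>E\<in>#G2 + {#B#}. occ p E) = (\<Sum>E\<in>#G2. occ p E) + occ p B" by simp
          ultimately show "(\<Sum>E\<in>#G2 + {#B#}. occ p E) + occ p (Atom q) \<le> 2"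
            using binp[of p] by linarith
        qed
      qed
      have "CL7 (G2 + G1 + {#Imp A1 B#}) (Atom q)" using CL7.impL[OF c2 c1] .
      moreover have "G2 + G1 + {#Imp A1 B#} = \<Gamma>" using G' GG CAB by (simp add: ac_simps)
      ultimately show ?thesis unfolding Atom by simp
    qed
  qed
qed

end
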